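(* Let $U:G\to\mathrm{Aut}(\mathcal{H}_{\rm kin})$ be a unitary representation with $U(G)\subset\mathcal{P}_n$, and let $\underline U:\ell^2(G)\to\mathcal{B}(\mathcal{H}_{\rm kin})$ be its associated $*$-algebra representation. Then the following are equivalent: (1) $U$ is faithful as a group representation and $-I\notin U(G)$; (2) $\underline U$ is faithful as a $*$-algebra representation (i.e. $\ker\underline U=\{0\}$).
   Context: $\mathcal{H}_{\rm kin}=(\mathbb{C}^2)^{\otimes n}$, $\mathcal{P}_n$ is the $n$-qubit Pauli group, $G=\mathbb{Z}_2^{\times(n-k)}$ with $0<k<n$. $\ell^2(G)$ is the group algebra of $G$: formal complex linear combinations $\sum_g f(g)\,g$, with product extending $g\star h=gh$ bilinearly and involution extending $g^*=g^{-1}$ antilinearly. $\underline U$ is the unique linear map with $\underline U(g)=U(g)$ for $g\in G$. *)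

theory Defs
  imports "Jordan_Normal_Form.Matrix"
begin

definition cadj :: "complex mat \<Rightarrow> complex mat" where
  "cadj A = mat (dim_col A) (dim_row A) (\<lambda>(i,j). cnj (A $$ (j,i)))"

definition unitary_mat :: "nat \<Rightarrow> complex mat \<Rightarrow> bool" where
  "unitary_mat d A \<longleftrightarrow> A \<in> carrier_mat d d \<and> A * cadj A = 1\<^sub>m d \<and> cadj A * A = 1\<^sub>m d"

definition kron :: "complex mat \<Rightarrow> complex mat \<Rightarrow> complex mat" where
  "kron A B = mat (dim_row A * dim_row B) (dim_col A * dim_col B)
     (\<lambda>(i,j). A $$ (i div dim_row B, j div dim_col B) * B $$ (i mod dim_row B, j mod dim_col B))"

definition kron_list :: "complex mat list \<Rightarrow> complex mat" where
  "kron_list Ps = foldr kron Ps (1\<^sub>m 1)"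

definition pauli_I :: "complex mat" where "pauli_I = mat_of_rows_list 2 [[1,0],[0,1]]"
definition pauli_X :: "complex mat" where "pauli_X = mat_of_rows_list 2 [[0,1],[1,0]]"
definition pauli_Y :: "complex mat" where "pauli_Y = mat_of_rows_list 2 [[0,-\<i>],[\<i>,0]]"
definition pauli_Z :: "complex mat" where "pauli_Z = mat_of_rows_list 2 [[1,0],[0,-1]]"

definition pauli_group :: "nat \<Rightarrow> complex mat set" where
  "pauli_group n = {(\<i> ^ c) \<cdot>\<^sub>m kron_list Ps | c Ps.
      c < 4 \<and> length Ps = n \<and> set Ps \<subseteq> {pauli_I, pauli_X, pauli_Y, pauli_Z}}"

definition Zgrp :: "nat \<Rightarrow> bool list set" where
  "Zgrp m = {xs. length xs = m}"

definition zmult :: "bool list \<Rightarrow> bool list \<Rightarrow> bool list" where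
  "zmult xs ys = map2 (\<noteq>) xs ys"

definition unitary_rep :: "nat \<Rightarrow> nat \<Rightarrow> (bool list \<Rightarrow> complex mat) \<Rightarrow> bool" where
  "unitary_rep m n U \<longleftrightarrow>
     (\<forall>g\<in>Zgrp m. unitary_mat (2^n) (U g)) \<and>
     (\<forall>g\<in>Zgrp m. \<forall>h\<in>Zgrp m. U (zmult g h) = U g * U h)"

text \<open>Linear extension to the group algebra: f (restricted to G) represents \<Sum>_g f(g) g.\<close>
definition lin_ext :: "nat \<Rightarrow> nat \<Rightarrow> (bool list \<Rightarrow> complex mat) \<Rightarrow> (bool list \<Rightarrow> complex) \<Rightarrow> complex mat" where
  "lin_ext m n U f = mat (2^n) (2^n) (\<lambda>(i,j). \<Sum>g\<in>Zgrp m. f g * U g $$ (i,j))"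

end

theory Submission
  imports Defs
begin
lemma sum_divmod: "(\<Sum>i<(a::nat)*b. f (i div b) * g (i mod b)) = (\<Sum>p<a. f p) * (\<Sum>q<b. (g q :: 'a::comm_semiring_1))"
proof (induction a)
  case 0 then show ?case by simp
next
  case (Suc a)
  let ?F = "\<lambda>i. f (i div b) * g (i mod b)"
  have "(\<Sum>i<Suc a*b. ?F i) = sum ?F {0..<a*b} + sum ?F {a*b..<a*b+b}"
    by (simp add: lessThan_atLeast0 sum.atLeastLessThan_concat add.commute)
  also have "sum ?F {a*b..<a*b+b} = sum (\<lambda>q. ?F (q + a*b)) {0..<b}"
    using sum.shift_bounds_nat_ivl[of ?F 0 "a*b" b] by (simp add: add.commute)
  also have "\<dots> = (\<Sum>q<b. f a * g q)"
    by (simp add: lessThan_atLeast0)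
  finally show ?case using Suc by (simp add: sum_distrib_left distrib_right sum.distrib lessThan_atLeast0)
qed

definition mytr :: "complex mat \<Rightarrow> complex" where
  "mytr A = (\<Sum>i<dim_row A. A $$ (i,i))"

lemma kron_dims[simp]: "dim_row (kron A B) = dim_row A * dim_row B" "dim_col (kron A B) = dim_col A * dim_col B"
  by (simp_all add: kron_def)

lemma tr_kron:
  assumes "A \<in> carrier_mat a a" "B \<in> carrier_mat b b"
  shows "mytr (kron A B) = mytr A * mytr B"
proof -
  have "mytr (kron A B) = (\<Sum>i<a*b. A $$ (i div b, i div b) * B $$ (i mod b, i mod b))"
    unfolding mytr_def using assms by (simp add: kron_def)
  also have "\<dots> = mytr A * mytr B"
    using assms sum_divmod[where a=a and b=b and f="\<lambda>p. A$$(p,p)" and g="\<lambda>q. B$$(q,q)"] by (simp add: mytr_def)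
  finally show ?thesis .
qed

lemma pauli_carrier: "P \<in> {pauli_I, pauli_X, pauli_Y, pauli_Z} \<Longrightarrow> P \<in> carrier_mat 2 2"
  by (auto simp: pauli_I_def pauli_X_def pauli_Y_def pauli_Z_def mat_of_rows_list_def)

lemma kron_list_carrier:
  "set Ps \<subseteq> {pauli_I, pauli_X, pauli_Y, pauli_Z} \<Longrightarrow> kron_list Ps \<in> carrier_mat (2^length Ps) (2^length Ps)"
proof (induction Ps)
  case Nil then show ?case by (simp add: kron_list_def)
next
  case (Cons P Ps)
  then have "P \<in> carrier_mat 2 2" by (intro pauli_carrier) auto
  with Cons show ?case by (auto simp: kron_list_def)
qed

lemma tr_paulis: "mytr pauli_I = 2" "mytr pauli_X = 0" "mytr pauli_Y = 0" "mytr pauli_Z = 0"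
  by (simp_all add: mytr_def pauli_I_def pauli_X_def pauli_Y_def pauli_Z_def mat_of_rows_list_def numeral_2_eq_2 lessThan_Suc)

lemma tr_kron_list_zero:
  "set Ps \<subseteq> {pauli_I, pauli_X, pauli_Y, pauli_Z} \<Longrightarrow> \<exists>P\<in>set Ps. P \<noteq> pauli_I \<Longrightarrow> mytr (kron_list Ps) = 0"
proof (induction Ps)
  case Nil then show ?case by simp
next
  case (Cons P Ps)
  then have P: "P \<in> carrier_mat 2 2" by (intro pauli_carrier) auto
  have K: "kron_list Ps \<in> carrier_mat (2^length Ps) (2^length Ps)" using Cons by (intro kron_list_carrier) auto
  have "mytr (kron_list (P # Ps)) = mytr P * mytr (kron_list Ps)"
    unfolding kron_list_def using tr_kron[OF P K] by (simp add: kron_list_def)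
  moreover have "mytr P = 0 \<or> mytr (kron_list Ps) = 0"
  proof (cases "P = pauli_I")
    case True then show ?thesis using Cons by auto
  next
    case False then show ?thesis using Cons.prems tr_paulis by auto
  qed
  ultimately show ?case by auto
qed

lemma kron_one: "kron (1\<^sub>m a) (1\<^sub>m b) = 1\<^sub>m (a*b)"
proof (rule eq_matI)
  fix i j assume "i < dim_row (1\<^sub>m (a*b))" "j < dim_col (1\<^sub>m (a*b))"
  then have ij: "i < a*b" "j < a*b" by auto
  then have b: "b > 0" by (cases b) auto
  have "i div b < a" "j div b < a" using ij by (simp_all add: less_mult_imp_div_less)
  moreover have "i mod b < b" "j mod b < b" using b by auto
  moreover have "(i div b = j div b \<and> i mod b = j mod b) = (i = j)"
    by (metis div_mult_mod_eq)
  ultimately show "kron (1\<^sub>m a) (1\<^sub>m b) $$ (i, j) = 1\<^sub>m (a*b) $$ (i, j)"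
    using ij by (auto simp: kron_def)
qed (auto simp: kron_def)

lemma pauliI_one: "pauli_I = 1\<^sub>m 2"
  by (rule eq_matI) (auto simp: pauli_I_def mat_of_rows_list_def less_2_cases_iff)

lemma kron_list_allI:
  "set Ps \<subseteq> {pauli_I} \<Longrightarrow> kron_list Ps = 1\<^sub>m (2^length Ps)"
proof (induction Ps)
  case Nil then show ?case by (simp add: kron_list_def)
next
  case (Cons P Ps)
  then show ?case using kron_one[of 2 "2^length Ps"] by (auto simp: kron_list_def pauliI_one)
qed

lemma mytr_smult: "A \<in> carrier_mat d d \<Longrightarrow> mytr (c \<cdot>\<^sub>m A) = c * mytr A"
  by (simp add: mytr_def sum_distrib_left)

lemma mytr_mult: "A \<in> carrier_mat d d \<Longrightarrow> B \<in> carrier_mat d d \<Longrightarrow>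
  mytr (A * B) = (\<Sum>i<d. \<Sum>j<d. A $$ (i,j) * B $$ (j,i))"
  by (simp add: mytr_def scalar_prod_def lessThan_atLeast0)

lemma mytr_one: "mytr (1\<^sub>m d) = of_nat d"
  by (simp add: mytr_def)

theorem mainTheorem19:
  fixes n k :: nat and U :: "bool list \<Rightarrow> complex mat"
  assumes "0 < k" and "k < n"
    and "unitary_rep (n - k) n U"
    and "U ` Zgrp (n - k) \<subseteq> pauli_group n"
  shows "(inj_on U (Zgrp (n - k)) \<and> - (1\<^sub>m (2^n)) \<notin> U ` Zgrp (n - k))
     \<longleftrightarrow> (\<forall>f. lin_ext (n - k) n U f = 0\<^sub>m (2^n) (2^n) \<longrightarrow> (\<forall>g\<in>Zgrp (n - k). f g = 0))"
proof -
  define m where "m = n - k"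
  define G where "G = Zgrp m"
  define d :: nat where "d = 2^n"
  define e where "e = replicate m False"
  have d0: "d > 0" by (simp add: d_def)
  have finG: "finite G"
    using finite_lists_length_eq[of "UNIV::bool set" m] by (simp add: G_def Zgrp_def)
  have eG: "e \<in> G" by (simp add: e_def G_def Zgrp_def)
  have zcl: "zmult g h \<in> G" if "g \<in> G" "h \<in> G" for g h
    using that by (simp add: G_def Zgrp_def zmult_def)
  have zself: "zmult g g = e" if "g \<in> G" for g
    using that by (simp add: G_def Zgrp_def zmult_def e_def list_eq_iff_nth_eq)
  have zeq: "g = h" if "zmult g h = e" "g \<in> G" "h \<in> G" for g h
  proof (rule nth_equalityI)
    show "length g = length h" using that by (simp add: G_def Zgrp_def)
    fix i assume "i < length g"
    then have "zmult g h ! i = e ! i" using that by simp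
    moreover have "zmult g h ! i = (g ! i \<noteq> h ! i)" using that(2,3) \<open>i < length g\<close> by (simp add: G_def Zgrp_def zmult_def)
    moreover have "e ! i = False" using that \<open>i < length g\<close> by (simp add: G_def Zgrp_def e_def)
    ultimately show "g ! i = h ! i" by auto
  qed
  have rep: "\<And>g. g \<in> G \<Longrightarrow> unitary_mat d (U g)" "\<And>g h. g \<in> G \<Longrightarrow> h \<in> G \<Longrightarrow> U (zmult g h) = U g * U h"
    using assms(3) by (auto simp: unitary_rep_def G_def m_def d_def)
  have car: "U g \<in> carrier_mat d d" if "g \<in> G" for g
    using rep(1)[OF that] by (simp add: unitary_mat_def)
  have Ue: "U e = 1\<^sub>m d"
  proof -
    have c: "cadj (U e) \<in> carrier_mat d d" using car[OF eG] by (simp add: cadj_def)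
    have u: "U e * cadj (U e) = 1\<^sub>m d" using rep(1)[OF eG] by (simp add: unitary_mat_def)
    have ee: "U e = U e * U e" using rep(2)[OF eG eG] zself[OF eG] by simp
    have "U e = U e * U e * cadj (U e)"
      using u car[OF eG] c assoc_mult_mat[OF car[OF eG] car[OF eG] c] by simp
    also have "\<dots> = U e * cadj (U e)" using ee[symmetric] by simp
    finally show ?thesis using u by simp
  qed
  have sq: "U g * U g = 1\<^sub>m d" if "g \<in> G" for g
    using rep(2)[OF that that] zself[OF that] Ue by simp
  have lin: "lin_ext m n U f $$ (i,j) = (\<Sum>g\<in>G. f g * U g $$ (i,j))" if "i < d" "j < d" for f i j
    using that by (simp add: lin_ext_def G_def d_def)
  have lindim: "lin_ext m n U f \<in> carrier_mat d d" for f
    by (simp add: lin_ext_def d_def)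
  have mone: "- 1\<^sub>m d \<noteq> (1\<^sub>m d :: complex mat)"
  proof
    assume "- 1\<^sub>m d = (1\<^sub>m d :: complex mat)"
    then have "(- 1\<^sub>m d :: complex mat) $$ (0,0) = 1\<^sub>m d $$ (0,0)" by simp
    then show False using d0 by simp
  qed
  show ?thesis
    unfolding m_def[symmetric] G_def[symmetric] d_def[symmetric]
  proof
    assume A: "inj_on U G \<and> - 1\<^sub>m d \<notin> U ` G"
    have tr0: "mytr (U g) = 0" if g: "g \<in> G" "g \<noteq> e" for g
    proof -
      have "U g \<in> pauli_group n" using assms(4) g by (auto simp: G_def m_def)
      then obtain c Ps where c: "U g = (\<i> ^ c) \<cdot>\<^sub>m kron_list Ps" "c < 4" "length Ps = n"
        "set Ps \<subseteq> {pauli_I, pauli_X, pauli_Y, pauli_Z}"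
        unfolding pauli_group_def by blast
      show ?thesis
      proof (cases "\<exists>P\<in>set Ps. P \<noteq> pauli_I")
        case True
        then show ?thesis using c tr_kron_list_zero mytr_smult[OF kron_list_carrier[OF c(4)]] by simp
      next
        case False
        then have "set Ps \<subseteq> {pauli_I}" by auto
        then have Ug: "U g = (\<i> ^ c) \<cdot>\<^sub>m 1\<^sub>m d" using c kron_list_allI by (simp add: d_def)
        have "(U g * U g) $$ (0,0) = \<i> ^ c * \<i> ^ c"
          using d0 by (simp add: Ug scalar_prod_def if_distrib[of "\<lambda>x. _ * x"] cong: if_cong)
        then have ic: "\<i> ^ c * \<i> ^ c = 1" using sq[OF g(1)] d0 by simp
        have "c = 0 \<or> c = 1 \<or> c = 2 \<or> c = 3" using c(2) by auto
        then show ?thesis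
        proof (elim disjE)
          assume "c = 0"
          then have "U g = U e" using Ug Ue by (auto intro!: eq_matI)
          then have "g = e" using A g(1) eG by (auto dest: inj_onD)
          then show ?thesis using g by simp
        next
          assume "c = 2"
          then have "U g = - 1\<^sub>m d" using Ug by (auto intro!: eq_matI)
          then show ?thesis using A g(1) by force
        qed (use ic in \<open>auto simp: power_numeral_reduce\<close>)
      qed
    qed
    show "\<forall>f. lin_ext m n U f = 0\<^sub>m d d \<longrightarrow> (\<forall>g\<in>G. f g = 0)"
    proof (intro allI impI ballI)
      fix f h assume L: "lin_ext m n U f = 0\<^sub>m d d" and h: "h \<in> G"
      have "0 = (\<Sum>i<d. \<Sum>j<d. lin_ext m n U f $$ (i,j) * U h $$ (j,i))"
        using L by simp
      also have "\<dots> = (\<Sum>i<d. \<Sum>j<d. \<Sum>g\<in>G. f g * (U g $$ (i,j) * U h $$ (j,i)))"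
        by (intro sum.cong refl) (simp add: lin sum_distrib_right mult.assoc)
      also have "\<dots> = (\<Sum>g\<in>G. f g * (\<Sum>i<d. \<Sum>j<d. U g $$ (i,j) * U h $$ (j,i)))"
        by (simp add: sum_distrib_left sum.swap[of _ G])
      also have "\<dots> = (\<Sum>g\<in>G. f g * mytr (U (zmult g h)))"
      proof (intro sum.cong refl)
        fix g assume g: "g \<in> G"
        show "f g * (\<Sum>i<d. \<Sum>j<d. U g $$ (i,j) * U h $$ (j,i)) = f g * mytr (U (zmult g h))"
          using mytr_mult[OF car[OF g] car[OF h]] rep(2)[OF g h] by simp
      qed
      also have "\<dots> = (\<Sum>g\<in>G. if g = h then f g * of_nat d else 0)"
      proof (intro sum.cong refl)
        fix g assume g: "g \<in> G"
        show "f g * mytr (U (zmult g h)) = (if g = h then f g * of_nat d else 0)"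
        proof (cases "g = h")
          case True then show ?thesis using zself[OF g] Ue mytr_one by simp
        next
          case False
          then have "zmult g h \<noteq> e" using zeq g h by blast
          then show ?thesis using tr0[OF zcl[OF g h]] False by simp
        qed
      qed
      also have "\<dots> = f h * of_nat d" using finG h by simp
      finally show "f h = 0" using d0 by simp
    qed
  next
    assume H: "\<forall>f. lin_ext m n U f = 0\<^sub>m d d \<longrightarrow> (\<forall>g\<in>G. f g = 0)"
    have two: "lin_ext m n U (\<lambda>x. (if x = a then 1 else 0) + s * (if x = b then 1 else 0)) = 0\<^sub>m d d"
      if "a \<in> G" "b \<in> G" "U a + s \<cdot>\<^sub>m U b = 0\<^sub>m d d" for a b s
    proof (rule eq_matI)
      fix i j assume ij: "i < dim_row (0\<^sub>m d d :: complex mat)" "j < dim_col (0\<^sub>m d d :: complex mat)"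
      have "(\<Sum>g\<in>G. ((if g = a then 1 else 0) + s * (if g = b then 1 else 0)) * U g $$ (i,j))
          = (\<Sum>g\<in>G. (if g = a then U g $$ (i,j) else 0) + s * (if g = b then U g $$ (i,j) else 0))"
        by (intro sum.cong refl) (auto simp: algebra_simps)
      also have "\<dots> = U a $$ (i,j) + s * U b $$ (i,j)"
        using finG that(1,2) by (simp add: sum.distrib sum_distrib_left[symmetric])
      also have "\<dots> = (U a + s \<cdot>\<^sub>m U b) $$ (i,j)"
        using ij car[OF that(1)] car[OF that(2)] by simp
      also have "\<dots> = 0" using that(3) ij by simp
      finally show "lin_ext m n U (\<lambda>x. (if x = a then 1 else 0) + s * (if x = b then 1 else 0)) $$ (i, j) = 0\<^sub>m d d $$ (i, j)"
        using ij lin by simp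
    qed (auto simp: lin_ext_def d_def)
    show "inj_on U G \<and> - 1\<^sub>m d \<notin> U ` G"
    proof
      show "inj_on U G"
      proof (rule inj_onI, rule ccontr)
        fix a b assume ab: "a \<in> G" "b \<in> G" "U a = U b" "a \<noteq> b"
        have "U a + (-1) \<cdot>\<^sub>m U b = 0\<^sub>m d d"
          using ab car[OF ab(2)] by (auto intro!: eq_matI)
        from H[rule_format, OF two[OF ab(1,2) this] ab(1)] ab(4) show False by simp
      qed
    next
      show "- 1\<^sub>m d \<notin> U ` G"
      proof
        assume "- 1\<^sub>m d \<in> U ` G"
        then obtain b where b: "b \<in> G" "U b = - 1\<^sub>m d" by auto
        have "b \<noteq> e" using b Ue mone by auto
        have "U e + 1 \<cdot>\<^sub>m U b = 0\<^sub>m d d"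
          using b Ue by (auto intro!: eq_matI)
        from H[rule_format, OF two[OF eG b(1) this] eG] \<open>b \<noteq> e\<close> show False by simp
      qed
    qed
  qed
qed
end
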